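(* Let $p\ge1$. Every two-agent randomized mechanism that is strategyproof, shift and scale invariant, symmetric, and satisfies $\mathbb{P}(f({\bf x})\in[\min(x_1,x_2),\max(x_1,x_2)])=1$ for every profile ${\bf x}$ has approximation ratio at least $\tfrac12\big(2^{1-\frac1p}+1\big)$ with respect to the $L_p$ social cost.
   Context: Two-agent randomized mechanisms map profiles ${\bf x}=(x_1,x_2)$ to distributions on $\mathbb{R}$ (identified with random variables); agent cost is expected distance to the facility; strategyproof means no agent can reduce his expected cost by misreporting. Social cost $sc({\bf x},\pi)=\mathbb{E}_{y\sim\pi}(|x_1-y|^p+|x_2-y|^p)^{1/p}$; approximation ratio $\sup_{\bf x}sc({\bf x},f({\bf x}))/\min_y sc({\bf x},y)$ (with $0/0=1$, $c/0=\infty$ for $c>0$). $m_{\bf x}=(x_1+x_2)/2$. $f$ is shift and scale invariant if for every profile with $x_1\le x_2$ and every $c\in\mathbb{R}$: (1) $f(x_1+c,x_2+c)$ is distributed as $f({\bf x})+c$; (2) if $c\ge0$, $f(cx_1,cx_2)$ is distributed as $c\,f({\bf x})$, and if $c<0$, $f(cx_1,cx_2)$ is distributed as $-c\,f(-x_2,-x_1)$. $f$ is symmetric if $\mathbb{P}(f({\bf x})\ge m_{\bf x}+y)=\mathbb{P}(f({\bf x})\le m_{\bf x}-y)$ for all profiles and all $y\in\mathbb{R}$. *)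

theory Defs
  imports "HOL-Probability.Probability"
begin

type_synonym mechanism = "real \<Rightarrow> real \<Rightarrow> real measure"

definition is_mechanism :: "mechanism \<Rightarrow> bool" where
  "is_mechanism f \<longleftrightarrow> (\<forall>x1 x2. prob_space (f x1 x2) \<and> sets (f x1 x2) = sets borel)"

definition agent_cost :: "real \<Rightarrow> real measure \<Rightarrow> ennreal" where
  "agent_cost a P = (\<integral>\<^sup>+ y. ennreal \<bar>a - y\<bar> \<partial>P)"

definition strategyproof :: "mechanism \<Rightarrow> bool" where
  "strategyproof f \<longleftrightarrow>
     (\<forall>x1 x2 x1'. agent_cost x1 (f x1 x2) \<le> agent_cost x1 (f x1' x2)) \<and>
     (\<forall>x1 x2 x2'. agent_cost x2 (f x1 x2) \<le> agent_cost x2 (f x1 x2'))"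

definition shift_scale_invariant :: "mechanism \<Rightarrow> bool" where
  "shift_scale_invariant f \<longleftrightarrow>
     (\<forall>x1 x2 c. x1 \<le> x2 \<longrightarrow>
        f (x1 + c) (x2 + c) = distr (f x1 x2) borel (\<lambda>y. y + c) \<and>
        (c \<ge> 0 \<longrightarrow> f (c * x1) (c * x2) = distr (f x1 x2) borel (\<lambda>y. c * y)) \<and>
        (c < 0 \<longrightarrow> f (c * x1) (c * x2) = distr (f (- x2) (- x1)) borel (\<lambda>y. - c * y)))"

definition symmetric_mech :: "mechanism \<Rightarrow> bool" where
  "symmetric_mech f \<longleftrightarrow>
     (\<forall>x1 x2 y. measure (f x1 x2) {z. z \<ge> (x1 + x2) / 2 + y}
              = measure (f x1 x2) {z. z \<le> (x1 + x2) / 2 - y})"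

definition interval_supported :: "mechanism \<Rightarrow> bool" where
  "interval_supported f \<longleftrightarrow>
     (\<forall>x1 x2. measure (f x1 x2) {min x1 x2 .. max x1 x2} = 1)"

definition Lp_cost :: "real \<Rightarrow> real \<Rightarrow> real \<Rightarrow> real \<Rightarrow> real" where
  "Lp_cost p x1 x2 y = (\<bar>x1 - y\<bar> powr p + \<bar>x2 - y\<bar> powr p) powr (1 / p)"

definition social_cost :: "real \<Rightarrow> real \<Rightarrow> real \<Rightarrow> real measure \<Rightarrow> ennreal" where
  "social_cost p x1 x2 P = (\<integral>\<^sup>+ y. ennreal (Lp_cost p x1 x2 y) \<partial>P)"

definition opt_cost :: "real \<Rightarrow> real \<Rightarrow> real \<Rightarrow> ennreal" where
  "opt_cost p x1 x2 = (INF y. ennreal (Lp_cost p x1 x2 y))"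

definition ratio_at :: "real \<Rightarrow> mechanism \<Rightarrow> real \<Rightarrow> real \<Rightarrow> ennreal" where
  "ratio_at p f x1 x2 =
     (if opt_cost p x1 x2 = 0 then (if social_cost p x1 x2 (f x1 x2) = 0 then 1 else \<infinity>)
      else social_cost p x1 x2 (f x1 x2) / opt_cost p x1 x2)"

definition approx_ratio :: "real \<Rightarrow> mechanism \<Rightarrow> ennreal" where
  "approx_ratio p f = (SUP x1. SUP x2. ratio_at p f x1 x2)"

end

theory Submission
  imports Defs
begin

lemma powr_sum_ge:
  fixes a b p :: real assumes "0 \<le> a" "0 \<le> b" "0 < p"
  shows "a \<le> (a powr p + b powr p) powr (1/p)"
proof -
  have "a = (a powr p) powr (1/p)" using assms by (simp add: powr_powr)
  also have "\<dots> \<le> (a powr p + b powr p) powr (1/p)"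
    by (rule powr_mono2) (use assms in auto)
  finally show ?thesis .
qed

lemma Lp_ge1:
  fixes p y :: real assumes "p \<ge> 1" "y \<le> 0 \<or> y \<ge> 1"
  shows "1 \<le> Lp_cost p 0 1 y"
proof -
  have "\<bar>1 - y\<bar> \<le> Lp_cost p 0 1 y"
    using powr_sum_ge[of "\<bar>1 - y\<bar>" "\<bar>0 - y\<bar>" p] assms unfolding Lp_cost_def
    by (simp add: add.commute)
  moreover have "\<bar>0 - y\<bar> \<le> Lp_cost p 0 1 y"
    using powr_sum_ge[of "\<bar>0 - y\<bar>" "\<bar>1 - y\<bar>" p] assms unfolding Lp_cost_def by simp
  ultimately show ?thesis using assms by auto
qed

lemma Lp_ge_half:
  fixes p y :: real assumes "p \<ge> 1"
  shows "1/2 \<le> Lp_cost p 0 1 y"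
proof -
  have "\<bar>1 - y\<bar> \<le> Lp_cost p 0 1 y"
    using powr_sum_ge[of "\<bar>1 - y\<bar>" "\<bar>0 - y\<bar>" p] assms unfolding Lp_cost_def
    by (simp add: add.commute)
  moreover have "\<bar>0 - y\<bar> \<le> Lp_cost p 0 1 y"
    using powr_sum_ge[of "\<bar>0 - y\<bar>" "\<bar>1 - y\<bar>" p] assms unfolding Lp_cost_def by simp
  ultimately show ?thesis by auto
qed

lemma Lp_mid:
  fixes p :: real assumes "p \<ge> 1"
  shows "Lp_cost p 0 1 (1/2) = 2 powr (1/p) / 2"
proof -
  have "Lp_cost p 0 1 (1/2) = (2 * (1/2) powr p) powr (1/p)"
    unfolding Lp_cost_def by simp
  also have "\<dots> = 2 powr (1/p) * ((1/2) powr p) powr (1/p)"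
    by (simp add: powr_mult)
  also have "\<dots> = 2 powr (1/p) / 2" using assms by (simp add: powr_powr)
  finally show ?thesis .
qed

lemma pointwise:
  fixes s y :: real assumes "0<s" "s<1" "0\<le>y" "y\<le>1"
  shows "\<bar>(1+s)*y - s\<bar> + \<bar>1-(1+s)*y\<bar> \<le> (1-s) + 2 * s * indicator {y. y < s/(1+s)} y + 2 * s * indicator {y. y > 1/(1+s)} y"
proof -
  define z where "z = (1+s)*y"
  have z0: "0 \<le> z" and z1: "z \<le> 1 + s" using assms unfolding z_def
    by (auto intro: mult_left_le)
  have e1: "y < s/(1+s) \<longleftrightarrow> z < s" using assms unfolding z_def by (simp add: field_simps)
  have e2: "y > 1/(1+s) \<longleftrightarrow> z > 1" using assms unfolding z_def by (simp add: field_simps)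
  show ?thesis unfolding z_def[symmetric] using z0 z1 e1 e2 assms
    by (auto simp: indicator_def split: abs_split)
qed

theorem mainTheorem14:
  fixes p :: real and f :: mechanism
  assumes "p \<ge> 1"
    and "is_mechanism f"
    and "strategyproof f"
    and "shift_scale_invariant f"
    and "symmetric_mech f"
    and "interval_supported f"
  shows "ennreal ((2 powr (1 - 1 / p) + 1) / 2) \<le> approx_ratio p f"
proof -
  define P where "P = f 0 1"
  have Pprob: "prob_space P" and Psets: "sets P = sets borel"
    using assms(2) unfolding is_mechanism_def P_def by auto
  interpret prob_space P by (rule Pprob)
  have meas: "measurable P borel = borel_measurable borel"
    by (rule measurable_cong_sets[OF Psets refl])
  have "measure P {0..1} = 1" using assms(6) unfolding interval_supported_def P_def
    by (metis min_def max_def zero_le_one)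
  hence AE01: "AE y in P. 0 \<le> y \<and> y \<le> 1"
    using AE_in_set_eq_1[of "{0..1}"] Psets by auto
  have key: "1/2 \<le> measure P {y. y < e} + measure P {y. y > 1 - e}"
    if e: "0 < e" "e < 1/2" for e
  proof -
    define s where "s = e / (1 - e)"
    have s: "0 < s" "s < 1" using e unfolding s_def by (auto simp: field_simps)
    have se1: "s/(1+s) = e" and se2: "1/(1+s) = 1 - e" using e unfolding s_def
      by (auto simp: field_simps)
    have SSI: "\<And>x1 x2 c. x1 \<le> x2 \<Longrightarrow>
        f (x1 + c) (x2 + c) = distr (f x1 x2) borel (\<lambda>y. y + c) \<and>
        (c \<ge> 0 \<longrightarrow> f (c * x1) (c * x2) = distr (f x1 x2) borel (\<lambda>y. c * y))"
      using assms(4) unfolding shift_scale_invariant_def by blast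
    have f1: "f 0 (1+s) = distr P borel (\<lambda>y. (1+s)*y)"
      using SSI[of 0 1 "1+s"] s unfolding P_def by simp
    have f2: "f (-s) 1 = distr (f 0 (1+s)) borel (\<lambda>y. y + -s)"
      using SSI[of 0 "1+s" "-s"] s by simp
    have c1: "agent_cost 0 (f (-s) 1) = (\<integral>\<^sup>+ y. ennreal \<bar>(1+s)*y - s\<bar> \<partial>P)"
    proof -
      have "agent_cost 0 (f (-s) 1) = (\<integral>\<^sup>+ x. ennreal \<bar>0 - (x + -s)\<bar> \<partial>(distr P borel (\<lambda>y. (1+s)*y)))"
        unfolding agent_cost_def f2 f1 by (rule nn_integral_distr) measurable
      also have "\<dots> = (\<integral>\<^sup>+ y. ennreal \<bar>0 - ((1+s)*y + -s)\<bar> \<partial>P)"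
        by (rule nn_integral_distr) (simp_all add: meas)
      finally show ?thesis by (simp add: abs_minus_commute)
    qed
    have c2: "agent_cost 1 (f 0 (1+s)) = (\<integral>\<^sup>+ y. ennreal \<bar>1 - (1+s)*y\<bar> \<partial>P)"
      unfolding agent_cost_def f1 by (rule nn_integral_distr) (simp_all add: meas)
    have c0: "agent_cost 0 P + agent_cost 1 P = 1"
    proof -
      have "agent_cost 0 P + agent_cost 1 P = (\<integral>\<^sup>+ y. ennreal \<bar>0 - y\<bar> + ennreal \<bar>1 - y\<bar> \<partial>P)"
        unfolding agent_cost_def by (subst nn_integral_add) (auto simp: meas)
      also have "\<dots> = (\<integral>\<^sup>+ y. 1 \<partial>P)"
      proof (rule nn_integral_cong_AE)
        show "AE y in P. ennreal \<bar>0 - y\<bar> + ennreal \<bar>1 - y\<bar> = 1"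
          using AE01
        proof eventually_elim
          case (elim y)
          have "ennreal \<bar>0 - y\<bar> + ennreal \<bar>1 - y\<bar> = ennreal (\<bar>0 - y\<bar> + \<bar>1 - y\<bar>)" by simp
          also have "\<dots> = 1" using elim by simp
          finally show ?case .
        qed
      qed
      also have "\<dots> = 1" by (simp add: emeasure_space_1)
      finally show ?thesis .
    qed
    have SP: "\<forall>x1 x2 x1'. agent_cost x1 (f x1 x2) \<le> agent_cost x1 (f x1' x2)"
         "\<forall>x1 x2 x2'. agent_cost x2 (f x1 x2) \<le> agent_cost x2 (f x1 x2')"
      using assms(3) unfolding strategyproof_def by auto
    have sp1: "agent_cost 0 P \<le> agent_cost 0 (f (-s) 1)"
      using SP(1) unfolding P_def by (elim allE[of _ 0] allE[of _ 1] allE[of _ "-s"])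
    have sp2: "agent_cost 1 P \<le> agent_cost 1 (f 0 (1+s))"
      using SP(2) unfolding P_def by (elim allE[of _ 0] allE[of _ 1] allE[of _ "1+s"])
    define A1 where "A1 = {y::real. y < e}"
    define A2 where "A2 = {y::real. y > 1 - e}"
    have A1s: "A1 \<in> sets P" and A2s: "A2 \<in> sets P" unfolding A1_def A2_def Psets by auto
    have "(1::ennreal) \<le> agent_cost 0 (f (-s) 1) + agent_cost 1 (f 0 (1+s))"
      using c0 add_mono[OF sp1 sp2] by simp
    also have "\<dots> = (\<integral>\<^sup>+ y. ennreal \<bar>(1+s)*y - s\<bar> + ennreal \<bar>1 - (1+s)*y\<bar> \<partial>P)"
      unfolding c1 c2 by (subst nn_integral_add) (auto simp: meas)
    also have "\<dots> \<le> (\<integral>\<^sup>+ y. ennreal (1-s) + ennreal (2 * s) * indicator A1 y + ennreal (2 * s) * indicator A2 y \<partial>P)"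
    proof (rule nn_integral_mono_AE)
      show "AE y in P. ennreal \<bar>(1+s)*y - s\<bar> + ennreal \<bar>1 - (1+s)*y\<bar>
         \<le> ennreal (1-s) + ennreal (2 * s) * indicator A1 y + ennreal (2 * s) * indicator A2 y"
        using AE01
      proof eventually_elim
        case (elim y)
        have "\<bar>(1+s)*y - s\<bar> + \<bar>1-(1+s)*y\<bar> \<le> (1-s) + 2 * s * indicator A1 y + 2 * s * indicator A2 y"
          using pointwise[of s y] s elim unfolding A1_def A2_def se1 se2 by simp
        hence "ennreal (\<bar>(1+s)*y - s\<bar> + \<bar>1-(1+s)*y\<bar>) \<le> ennreal ((1-s) + 2 * s * indicator A1 y + 2 * s * indicator A2 y)"
          by (rule ennreal_leI)
        moreover have "ennreal \<bar>(1+s)*y - s\<bar> + ennreal \<bar>1 - (1+s)*y\<bar> = ennreal (\<bar>(1+s)*y - s\<bar> + \<bar>1-(1+s)*y\<bar>)"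
          by simp
        moreover have "ennreal (1-s) + ennreal (2 * s) * indicator A1 y + ennreal (2 * s) * indicator A2 y
            = ennreal ((1-s) + 2 * s * indicator A1 y + 2 * s * indicator A2 y)"
          using s by (simp add: ennreal_mult' ennreal_indicator)
        ultimately show ?case by (simp only:)
      qed
    qed
    also have "\<dots> = ennreal (1-s) + ennreal (2 * s) * emeasure P A1 + ennreal (2 * s) * emeasure P A2"
    proof -
      note [measurable] = A1s A2s
      have i1: "(\<integral>\<^sup>+ y. ennreal (2 * s) * indicator A1 y \<partial>P) = ennreal (2 * s) * emeasure P A1"
        by (rule nn_integral_cmult_indicator[OF A1s])
      have i2: "(\<integral>\<^sup>+ y. ennreal (2 * s) * indicator A2 y \<partial>P) = ennreal (2 * s) * emeasure P A2"
        by (rule nn_integral_cmult_indicator[OF A2s])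
      have i0: "(\<integral>\<^sup>+ y. ennreal (1-s) \<partial>P) = ennreal (1-s)"
        by (simp add: emeasure_space_1)
      have "(\<integral>\<^sup>+ y. ennreal (1-s) + ennreal (2 * s) * indicator A1 y + ennreal (2 * s) * indicator A2 y \<partial>P)
          = (\<integral>\<^sup>+ y. ennreal (1-s) + ennreal (2 * s) * indicator A1 y \<partial>P) + (\<integral>\<^sup>+ y. ennreal (2 * s) * indicator A2 y \<partial>P)"
        by (rule nn_integral_add) measurable
      also have "(\<integral>\<^sup>+ y. ennreal (1-s) + ennreal (2 * s) * indicator A1 y \<partial>P)
          = (\<integral>\<^sup>+ y. ennreal (1-s) \<partial>P) + (\<integral>\<^sup>+ y. ennreal (2 * s) * indicator A1 y \<partial>P)"
        by (rule nn_integral_add) measurable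
      finally show ?thesis unfolding i0 i1 i2 .
    qed
    also have "\<dots> = ennreal ((1-s) + 2 * s * measure P A1 + 2 * s * measure P A2)"
      using s by (simp add: emeasure_eq_measure ennreal_mult')
    finally have "ennreal 1 \<le> ennreal ((1-s) + 2 * s * measure P A1 + 2 * s * measure P A2)"
      by (simp only: ennreal_1)
    hence "1 \<le> (1-s) + 2 * s * measure P A1 + 2 * s * measure P A2"
      using s by (subst (asm) ennreal_le_iff) auto
    hence "s * 1 \<le> s * (2 * (measure P A1 + measure P A2))" by (simp add: algebra_simps)
    hence "1 \<le> 2 * (measure P A1 + measure P A2)" using s by (simp add: mult_le_cancel_left_pos)
    thus ?thesis unfolding A1_def A2_def by simp
  qed
  define E where "E n = 1 / (real n + 3)" for n :: nat
  have E: "0 < E n" "E n < 1/2" for n unfolding E_def by (auto simp: field_simps)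
  have decE: "E m \<le> E n" if "n \<le> m" for n m
    unfolding E_def using that by (auto intro!: divide_left_mono)
  have smallE: "\<exists>n. E n < y" if y0: "0 < y" for y
  proof -
    obtain n :: nat where n: "n > 0" "inverse (real n) < y" using ex_inverse_of_nat_less[OF y0] by auto
    have "E n \<le> inverse (real n)" unfolding E_def using n by (auto simp: field_simps)
    thus ?thesis using n(2) by (intro exI[of _ n]) simp
  qed
  have I1: "(\<Inter>n. {y. y < E n}) = {y::real. y \<le> 0}"
  proof
    show "(\<Inter>n. {y. y < E n}) \<subseteq> {y::real. y \<le> 0}"
    proof
      fix y assume y: "y \<in> (\<Inter>n. {y. y < E n})"
      show "y \<in> {y. y \<le> 0}"
      proof (rule ccontr)
        assume "y \<notin> {y. y \<le> 0}"
        hence "0 < y" by simp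
        then obtain n where "E n < y" using smallE by blast
        moreover have "y < E n" using y by simp
        ultimately show False by simp
      qed
    qed
    show "{y::real. y \<le> 0} \<subseteq> (\<Inter>n. {y. y < E n})" using E(1) by (auto intro: le_less_trans)
  qed
  have I2: "(\<Inter>n. {y. y > 1 - E n}) = {y::real. y \<ge> 1}"
  proof
    show "(\<Inter>n. {y. y > 1 - E n}) \<subseteq> {y::real. y \<ge> 1}"
    proof
      fix y assume y: "y \<in> (\<Inter>n. {y. y > 1 - E n})"
      show "y \<in> {y. y \<ge> 1}"
      proof (rule ccontr)
        assume "y \<notin> {y. y \<ge> 1}"
        hence "0 < 1 - y" by simp
        then obtain n where "E n < 1 - y" using smallE by blast
        moreover have "y > 1 - E n" using y by simp
        ultimately show False by simp
      qed
    qed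
    show "{y::real. y \<ge> 1} \<subseteq> (\<Inter>n. {y. y > 1 - E n})" proof
    fix y :: real assume "y \<in> {y. y \<ge> 1}"
    thus "y \<in> (\<Inter>n. {y. y > 1 - E n})" using E(1) by (auto intro: less_le_trans[of _ 1])
  qed
  qed
  have lim1: "(\<lambda>n. measure P {y. y < E n}) \<longlonglongrightarrow> measure P {y. y \<le> 0}"
    unfolding I1[symmetric]
  proof (rule finite_Lim_measure_decseq)
    show "range (\<lambda>n. {y. y < E n}) \<subseteq> sets P" by (auto simp: Psets)
    show "decseq (\<lambda>n. {y. y < E n})" unfolding decseq_def
    proof (intro allI impI subsetI)
      fix n m y assume "n \<le> m" "y \<in> {y. y < E m}"
      thus "y \<in> {y. y < E n}" using decE[of n m] by simp
    qed
  qed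
  have lim2: "(\<lambda>n. measure P {y. y > 1 - E n}) \<longlonglongrightarrow> measure P {y. y \<ge> 1}"
    unfolding I2[symmetric]
  proof (rule finite_Lim_measure_decseq)
    show "range (\<lambda>n. {y. y > 1 - E n}) \<subseteq> sets P" by (auto simp: Psets)
    show "decseq (\<lambda>n. {y. y > 1 - E n})" unfolding decseq_def
    proof (intro allI impI subsetI)
      fix n m y assume "n \<le> m" "y \<in> {y. y > 1 - E m}"
      thus "y \<in> {y. y > 1 - E n}" using decE[of n m] by simp
    qed
  qed
  define A where "A = {y::real. y \<le> 0} \<union> {y. y \<ge> 1}"
  define m where "m = measure P A"
  have As: "A \<in> sets P" unfolding A_def Psets by auto
  have m_eq: "m = measure P {y. y \<le> 0} + measure P {y. y \<ge> 1}"
    unfolding m_def A_def by (rule finite_measure_Union) (auto simp: Psets)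
  have m_ge: "1/2 \<le> m"
    unfolding m_eq
    by (rule LIMSEQ_le_const[OF tendsto_add[OF lim1 lim2]]) (use key[OF E] in auto)
  have m_le: "m \<le> 1" unfolding m_def by simp
  define q where "q = 2 powr (1/p)"
  have q: "0 < q" "q \<le> 2" unfolding q_def using assms(1)
    using powr_mono[of "1/p" 1 2] by auto
  define oc where "oc = opt_cost p 0 1"
  have oL: "oc \<le> ennreal (Lp_cost p 0 1 y)" for y
    unfolding oc_def opt_cost_def by (rule INF_lower) simp
  have oge: "ennreal (1/2) \<le> oc"
    unfolding oc_def opt_cost_def by (rule INF_greatest) (rule ennreal_leI[OF Lp_ge_half[OF assms(1)]])
  have ole: "oc \<le> ennreal (q/2)" using oL[of "1/2"] Lp_mid[OF assms(1)] unfolding q_def by simp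
  hence otop: "oc < top" using le_less_trans by fastforce
  define r where "r = enn2real oc"
  have o_r: "oc = ennreal r" unfolding r_def using otop by simp
  have r1: "1/2 \<le> r" using ennreal_le_iff[THEN iffD1, OF _ oge[unfolded o_r]] by (simp add: r_def)
  have r2: "r \<le> q/2" using ole q unfolding o_r by simp
  have rL: "r \<le> Lp_cost p 0 1 y" for y
  proof -
    have "0 \<le> Lp_cost p 0 1 y" using Lp_ge_half[OF assms(1), of y] by simp
    thus ?thesis using oL[of y] unfolding o_r by simp
  qed
  have sc: "ennreal (r + (1 - r) * m) \<le> social_cost p 0 1 P"
  proof -
    note [measurable] = As
    have "ennreal (r + (1 - r) * m) = ennreal r + ennreal (1 - r) * emeasure P A"
      using r1 r2 q m_ge unfolding m_def by (simp add: emeasure_eq_measure ennreal_mult')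
    also have "\<dots> = (\<integral>\<^sup>+ y. ennreal r \<partial>P) + (\<integral>\<^sup>+ y. ennreal (1 - r) * indicator A y \<partial>P)"
      by (simp add: emeasure_space_1 nn_integral_cmult_indicator[OF As])
    also have "\<dots> = (\<integral>\<^sup>+ y. ennreal r + ennreal (1 - r) * indicator A y \<partial>P)"
      by (rule nn_integral_add[symmetric]) measurable
    also have "\<dots> \<le> (\<integral>\<^sup>+ y. ennreal (Lp_cost p 0 1 y) \<partial>P)"
    proof (rule nn_integral_mono)
      fix y
      have "r + (1 - r) * indicator A y \<le> Lp_cost p 0 1 y"
      proof (cases "y \<in> A")
        case True
        hence "1 \<le> Lp_cost p 0 1 y" using Lp_ge1[OF assms(1)] unfolding A_def by auto
        thus ?thesis using True by simp
      next
        case False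
        thus ?thesis using rL[of y] by simp
      qed
      hence "ennreal (r + (1 - r) * indicator A y) \<le> ennreal (Lp_cost p 0 1 y)"
        by (rule ennreal_leI)
      moreover have "ennreal (r + (1 - r) * indicator A y) = ennreal r + ennreal (1 - r) * indicator A y"
        using r1 r2 q by (simp add: ennreal_mult' ennreal_indicator)
      ultimately show "ennreal r + ennreal (1 - r) * indicator A y \<le> ennreal (Lp_cost p 0 1 y)"
        by simp
    qed
    finally show ?thesis unfolding social_cost_def .
  qed
  define B where "B = (2 powr (1 - 1 / p) + 1) / 2"
  have B: "B = (2 / q + 1) / 2" unfolding B_def q_def by (simp add: powr_diff)
  have Br: "B * r \<le> r + (1 - r) * m"
  proof -
    have "r / q \<le> 1/2" using r2 q by (simp add: field_simps)
    moreover have "(1 - r) * (1/2) \<le> (1 - r) * m" using m_ge r2 q by (intro mult_left_mono) auto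
    moreover have "B * r = r / q + r / 2" unfolding B by (simp add: field_simps)
    moreover have "(1 - r) * (1/2) = 1/2 - r/2" by simp
    ultimately show ?thesis by linarith
  qed
  have "ennreal B = ennreal (B * r) / ennreal r"
    using r1 q by (subst divide_ennreal) (auto simp: B)
  also have "\<dots> \<le> social_cost p 0 1 P / ennreal r"
    by (rule divide_right_mono_ennreal) (use sc Br order_trans ennreal_leI in blast)
  also have "\<dots> = ratio_at p f 0 1"
    unfolding ratio_at_def P_def[symmetric] oc_def[symmetric] o_r using r1 by simp
  also have "\<dots> \<le> (SUP x2. ratio_at p f 0 x2)" by (rule SUP_upper) simp
  also have "\<dots> \<le> approx_ratio p f"
    unfolding approx_ratio_def by (rule SUP_upper[where f="\<lambda>x1. SUP x2. ratio_at p f x1 x2"]) simp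
  finally show ?thesis unfolding B_def .

qed

end
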